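(* For every $1\le k\le e-1$, the interval $[1,\lambda^k]$ equals $D_k$, and $\lambda^k$ is balanced, i.e. $[1,\lambda^k]=[1,\lambda^k]_r$.
   Context: Let $e\ge 2$, $n\ge 2$, $\zeta_e=e^{2\pi i/e}$. $G(e,e,n)$ is the group of $n\times n$ monomial matrices with nonzero entries $e$-th roots of unity whose product is $1$; $w[i,c]$ is the $(i,c)$ entry. For $i\in\mathbb{Z}/e\mathbb{Z}$, $t_i$ is the matrix with $(1,2)$ entry $\zeta_e^{-i}$, $(2,1)$ entry $\zeta_e^{i}$, $(j,j)$ entry $1$ for $3\le j\le n$, other entries $0$; for $3\le j\le n$, $s_j$ is the permutation matrix of the transposition $(j-1\ j)$. $X=\{t_0,\dots,t_{e-1},s_3,\dots,s_n\}$ and $\ell$ is the word length with respect to $X$. For $u,w\in G(e,e,n)$ write $u\preceq w$ if $\ell(u)+\ell(u^{-1}w)=\ell(w)$, and $u\preceq_r w$ if $\ell(wu^{-1})+\ell(u)=\ell(w)$. For $g\in G(e,e,n)$, $[1,g]=\{w: w\preceq g\}$ and $[1,g]_r=\{w: w\preceq_r g\}$; $g$ is balanced if $[1,g]=[1,g]_r$. Let $\lambda$ be the diagonal matrix $\mathrm{diag}(\zeta_e^{-(n-1)},\zeta_e,\dots,\zeta_e)\in G(e,e,n)$. For $w\in G(e,e,n)$, a nonzero entry $w[i,c]$ is called a bullet if there is no nonzero entry $w[i',c']$ with $i'<i$ and $c'<c$. For $1\le k\le e-1$, $D_k$ is the set of $w\in G(e,e,n)$ such that every nonzero entry of $w$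 that is not a bullet is equal to $1$ or to $\zeta_e^{k}$. *)

theory Defs
  imports Complex_Main
begin

text \<open>Matrices of size n x n are represented as functions nat => nat => complex,
  with rows/columns indexed by 1..n; all entries outside {1..n}^2 are 0.\<close>

type_synonym cmat = "nat \<Rightarrow> nat \<Rightarrow> complex"

definition zeta :: "nat \<Rightarrow> complex" where
  "zeta e = cis (2 * pi / real e)"

definition idm :: "nat \<Rightarrow> cmat" where
  "idm n = (\<lambda>i j. if i = j \<and> i \<in> {1..n} then 1 else 0)"

definition mmult :: "nat \<Rightarrow> cmat \<Rightarrow> cmat \<Rightarrow> cmat" where
  "mmult n A B = (\<lambda>i j. \<Sum>k\<in>{1..n}. A i k * B k j)"

definition mpow :: "nat \<Rightarrow> cmat \<Rightarrow> nat \<Rightarrow> cmat" where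
  "mpow n A k = ((mmult n A) ^^ k) (idm n)"

definition Geen :: "nat \<Rightarrow> nat \<Rightarrow> cmat set" where
  "Geen e n = {A.
     (\<forall>i j. (i \<notin> {1..n} \<or> j \<notin> {1..n}) \<longrightarrow> A i j = 0) \<and>
     (\<forall>i\<in>{1..n}. \<exists>!j. j \<in> {1..n} \<and> A i j \<noteq> 0) \<and>
     (\<forall>j\<in>{1..n}. \<exists>!i. i \<in> {1..n} \<and> A i j \<noteq> 0) \<and>
     (\<forall>i j. A i j \<noteq> 0 \<longrightarrow> A i j ^ e = 1) \<and>
     (\<Prod>i\<in>{1..n}. \<Prod>j\<in>{1..n}. if A i j \<noteq> 0 then A i j else 1) = 1}"

definition ginv :: "nat \<Rightarrow> nat \<Rightarrow> cmat \<Rightarrow> cmat" where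
  "ginv e n w = (THE u. u \<in> Geen e n \<and> mmult n w u = idm n)"

definition tgen :: "nat \<Rightarrow> nat \<Rightarrow> int \<Rightarrow> cmat" where
  "tgen e n i = (\<lambda>r c.
     if r = 1 \<and> c = 2 then zeta e powi (- i)
     else if r = 2 \<and> c = 1 then zeta e powi i
     else if 3 \<le> r \<and> r \<le> n \<and> r = c then 1 else 0)"

definition sgen :: "nat \<Rightarrow> nat \<Rightarrow> cmat" where
  "sgen n j = (\<lambda>r c.
     if r \<in> {1..n} \<and> c \<in> {1..n} \<and>
        c = (if r = j - 1 then j else if r = j then j - 1 else r) then 1 else 0)"

definition gens :: "nat \<Rightarrow> nat \<Rightarrow> cmat set" where
  "gens e n = {tgen e n (int i) | i. i < e} \<union> {sgen n j | j. 3 \<le> j \<and> j \<le> n}"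

definition wprod :: "nat \<Rightarrow> cmat list \<Rightarrow> cmat" where
  "wprod n ws = foldr (mmult n) ws (idm n)"

definition wlen :: "nat \<Rightarrow> nat \<Rightarrow> cmat \<Rightarrow> nat" where
  "wlen e n w = (LEAST k. \<exists>ws. set ws \<subseteq> gens e n \<and> length ws = k \<and> wprod n ws = w)"

definition lpref :: "nat \<Rightarrow> nat \<Rightarrow> cmat \<Rightarrow> cmat \<Rightarrow> bool" where
  "lpref e n u w \<longleftrightarrow> wlen e n u + wlen e n (mmult n (ginv e n u) w) = wlen e n w"

definition rpref :: "nat \<Rightarrow> nat \<Rightarrow> cmat \<Rightarrow> cmat \<Rightarrow> bool" where
  "rpref e n u w \<longleftrightarrow> wlen e n (mmult n w (ginv e n u)) + wlen e n u = wlen e n w"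

definition interval :: "nat \<Rightarrow> nat \<Rightarrow> cmat \<Rightarrow> cmat set" where
  "interval e n g = {w \<in> Geen e n. lpref e n w g}"

definition interval_r :: "nat \<Rightarrow> nat \<Rightarrow> cmat \<Rightarrow> cmat set" where
  "interval_r e n g = {w \<in> Geen e n. rpref e n w g}"

definition balanced :: "nat \<Rightarrow> nat \<Rightarrow> cmat \<Rightarrow> bool" where
  "balanced e n g \<longleftrightarrow> interval e n g = interval_r e n g"

definition lam :: "nat \<Rightarrow> nat \<Rightarrow> cmat" where
  "lam e n = (\<lambda>r c. if r = c \<and> r = 1 then inverse (zeta e ^ (n - 1))
                    else if r = c \<and> 2 \<le> r \<and> r \<le> n then zeta e else 0)"

definition is_bullet :: "cmat \<Rightarrow> nat \<Rightarrow> nat \<Rightarrow> bool" where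
  "is_bullet w i c \<longleftrightarrow> w i c \<noteq> 0 \<and> \<not> (\<exists>i' c'. i' < i \<and> c' < c \<and> w i' c' \<noteq> 0)"

definition Dk :: "nat \<Rightarrow> nat \<Rightarrow> nat \<Rightarrow> cmat set" where
  "Dk e n k = {w \<in> Geen e n. \<forall>i c. w i c \<noteq> 0 \<and> \<not> is_bullet w i c \<longrightarrow>
                  w i c = 1 \<or> w i c = zeta e ^ k}"

end

theory Submission
  imports Defs
begin


lemma zeta_pow: "e > 0 \<Longrightarrow> zeta e ^ k = cis (2 * pi * real k / real e)"
  unfolding zeta_def DeMoivre by (simp add: mult.commute)

lemma zeta_e: "e > 0 \<Longrightarrow> zeta e ^ e = 1"
  using zeta_pow[of e e] by simp

lemma zeta_nz[simp]: "zeta e \<noteq> 0"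
  by (simp add: zeta_def)

lemma root_is_zeta_pow:
  assumes "e > 0" "z ^ e = 1" shows "\<exists>j<e. z = zeta e ^ j"
proof -
  have "z \<in> (\<lambda>k. cis (2 * pi * real k / real e)) ` {..<e}"
    using bij_betw_roots_unity[OF assms(1)] assms(2) unfolding bij_betw_def by auto
  then obtain k where "k < e" "z = cis (2 * pi * real k / real e)" by auto
  then show ?thesis using zeta_pow[OF assms(1), of k] by metis
qed

lemma zeta_pow_ne1:
  assumes "0 < k" "k < e" shows "zeta e ^ k \<noteq> 1"
proof
  assume h: "zeta e ^ k = 1"
  have e: "e > 0" using assms by simp
  have "inj_on (\<lambda>k. cis (2 * pi * real k / real e)) {..<e}"
    using bij_betw_roots_unity[OF e] unfolding bij_betw_def by auto
  moreover have "cis (2 * pi * real k / real e) = 1"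
    using h zeta_pow[OF e, of k] by metis
  moreover have "cis (2 * pi * real 0 / real e) = 1" by simp
  ultimately have "k = 0" using assms unfolding inj_on_def
    by (metis (no_types, lifting) lessThan_iff less_trans)
  then show False using assms by simp
qed



definition sw :: "nat \<Rightarrow> nat \<Rightarrow> nat" where
  "sw m r = (if r = m - 1 then m else if r = m then m - 1 else r)"

definition mon :: "nat \<Rightarrow> (nat \<Rightarrow> nat) \<Rightarrow> (nat \<Rightarrow> complex) \<Rightarrow> cmat" where
  "mon n s a = (\<lambda>r c. if r \<in> {1..n} \<and> c = s r then a r else 0)"

definition Valid :: "nat \<Rightarrow> nat \<Rightarrow> (nat \<Rightarrow> nat) \<Rightarrow> (nat \<Rightarrow> complex) \<Rightarrow> bool" where
  "Valid e n s a \<longleftrightarrow> bij_betw s {1..n} {1..n} \<and> (\<forall>r\<in>{1..n}. a r ^ e = 1) \<and> prod a {1..n} = 1"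

lemma mon_mult:
  assumes "s ` {1..n} \<subseteq> {1..n}"
  shows "mmult n (mon n s a) (mon n t b) = mon n (t \<circ> s) (\<lambda>r. a r * b (s r))"
proof (rule ext, rule ext)
  fix i j
  show "mmult n (mon n s a) (mon n t b) i j = mon n (t \<circ> s) (\<lambda>r. a r * b (s r)) i j"
  proof (cases "i \<in> {1..n}")
    case True
    then have si: "s i \<in> {1..n}" using assms by blast
    have "mmult n (mon n s a) (mon n t b) i j =
          (\<Sum>k\<in>{1..n}. if k = s i then a i * mon n t b k j else 0)"
      unfolding mmult_def using True by (intro sum.cong) (auto simp: mon_def)
    also have "\<dots> = a i * mon n t b (s i) j" using si by simp
    finally show ?thesis using True si by (auto simp: mon_def)
  next
    case False
    then show ?thesis by (auto simp: mmult_def mon_def)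
  qed
qed

lemma mon_cong:
  assumes "\<And>r. r \<in> {1..n} \<Longrightarrow> s r = s' r \<and> a r = a' r"
  shows "mon n s a = mon n s' a'"
  using assms unfolding mon_def by (intro ext) auto

lemma mon_inj:
  assumes "mon n s a = mon n s' a'" "r \<in> {1..n}" "a r \<noteq> 0"
  shows "s' r = s r \<and> a' r = a r"
proof -
  have "mon n s a r (s r) = mon n s' a' r (s r)" using assms(1) by simp
  then show ?thesis using assms(2,3) unfolding mon_def by (auto split: if_splits)
qed

lemma idm_mono: "idm n = mon n id (\<lambda>_. 1)"
  unfolding idm_def mon_def by (intro ext) auto

lemma Valid_nz: "Valid e n s a \<Longrightarrow> e > 0 \<Longrightarrow> r \<in> {1..n} \<Longrightarrow> a r \<noteq> 0"
  unfolding Valid_def by (metis power_0_left zero_neq_one neq0_conv)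

lemma prod_mono:
  assumes "s ` {1..n} \<subseteq> {1..n}" "\<And>r. r \<in> {1..n} \<Longrightarrow> a r \<noteq> 0"
  shows "(\<Prod>i\<in>{1..n}. \<Prod>j\<in>{1..n}. if mon n s a i j \<noteq> 0 then mon n s a i j else 1) = prod a {1..n}"
proof (rule prod.cong[OF refl])
  fix i assume i: "i \<in> {1..n}"
  have "(\<Prod>j\<in>{1..n}. if mon n s a i j \<noteq> 0 then mon n s a i j else 1)
        = (\<Prod>j\<in>{1..n}. if j = s i then a i else 1)"
    using i assms(2)[OF i] by (intro prod.cong) (auto simp: mon_def)
  also have "\<dots> = a i" using assms(1) i by (simp add: prod.delta image_subset_iff)
  finally show "(\<Prod>j\<in>{1..n}. if mon n s a i j \<noteq> 0 then mon n s a i j else 1) = a i" .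
qed

lemma Valid_Geen: assumes "Valid e n s a" "e > 0" shows "mon n s a \<in> Geen e n"
proof -
  have b: "bij_betw s {1..n} {1..n}" and r: "\<And>r. r\<in>{1..n} \<Longrightarrow> a r ^ e = 1"
    and p: "prod a {1..n} = 1" using assms(1) unfolding Valid_def by auto
  have nz: "\<And>r. r\<in>{1..n} \<Longrightarrow> a r \<noteq> 0" using Valid_nz[OF assms] .
  have im: "s ` {1..n} \<subseteq> {1..n}" using b by (simp add: bij_betw_def)
  have inj: "inj_on s {1..n}" using b by (simp add: bij_betw_def)
  have c1: "\<forall>i\<in>{1..n}. \<exists>!j. j \<in> {1..n} \<and> mon n s a i j \<noteq> 0"
  proof
    fix i assume i: "i \<in> {1..n}"
    show "\<exists>!j. j \<in> {1..n} \<and> mon n s a i j \<noteq> 0"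
    proof (rule ex1I[of _ "s i"])
      have "s i \<in> {1..n}" using i im by blast
      then show "s i \<in> {1..n} \<and> mon n s a i (s i) \<noteq> 0" using i nz by (auto simp: mon_def)
      fix j assume "j \<in> {1..n} \<and> mon n s a i j \<noteq> 0"
      then show "j = s i" by (auto simp: mon_def split: if_splits)
    qed
  qed
  have c2: "\<forall>j\<in>{1..n}. \<exists>!i. i \<in> {1..n} \<and> mon n s a i j \<noteq> 0"
  proof
    fix j assume j: "j \<in> {1..n}"
    have "j \<in> s ` {1..n}" using b j by (simp add: bij_betw_def)
    then obtain i where i: "i \<in> {1..n}" "s i = j" by blast
    show "\<exists>!i. i \<in> {1..n} \<and> mon n s a i j \<noteq> 0"
    proof (rule ex1I[of _ i])
      show "i \<in> {1..n} \<and> mon n s a i j \<noteq> 0" using i nz by (auto simp: mon_def)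
      fix i' assume "i' \<in> {1..n} \<and> mon n s a i' j \<noteq> 0"
      then have "i' \<in> {1..n}" "s i' = j" by (auto simp: mon_def split: if_splits)
      then show "i' = i" using i inj_onD[OF inj, of i' i] by simp
    qed
  qed
  have c0: "\<forall>i j. (i \<notin> {1..n} \<or> j \<notin> {1..n}) \<longrightarrow> mon n s a i j = 0"
    using im unfolding mon_def by (auto simp: image_subset_iff)
  have c3: "\<forall>i j. mon n s a i j \<noteq> 0 \<longrightarrow> mon n s a i j ^ e = 1"
    using r unfolding mon_def by simp
  have c4: "(\<Prod>i\<in>{1..n}. \<Prod>j\<in>{1..n}. if mon n s a i j \<noteq> 0 then mon n s a i j else 1) = 1"
    using prod_mono[OF im nz] p by simp
  show ?thesis unfolding Geen_def mem_Collect_eq by (rule conjI[OF c0 conjI[OF c1 conjI[OF c2 conjI[OF c3 c4]]]])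
qed

lemma Geen_Valid:
  assumes "w \<in> Geen e n" shows "\<exists>s a. Valid e n s a \<and> w = mon n s a"
proof -
  let ?R = "{1..n}"
  have G: "(\<forall>i j. (i \<notin> ?R \<or> j \<notin> ?R) \<longrightarrow> w i j = 0) \<and>
     (\<forall>i\<in>?R. \<exists>!j. j \<in> ?R \<and> w i j \<noteq> 0) \<and>
     (\<forall>j\<in>?R. \<exists>!i. i \<in> ?R \<and> w i j \<noteq> 0) \<and>
     (\<forall>i j. w i j \<noteq> 0 \<longrightarrow> w i j ^ e = 1) \<and>
     (\<Prod>i\<in>?R. \<Prod>j\<in>?R. if w i j \<noteq> 0 then w i j else 1) = 1"
    using assms unfolding Geen_def mem_Collect_eq .
  have z0: "\<forall>i j. (i \<notin> ?R \<or> j \<notin> ?R) \<longrightarrow> w i j = 0" using G[THEN conjunct1] .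
  have row0: "\<forall>i\<in>?R. \<exists>!j. j \<in> ?R \<and> w i j \<noteq> 0" using G[THEN conjunct2, THEN conjunct1] .
  have col0: "\<forall>j\<in>?R. \<exists>!i. i \<in> ?R \<and> w i j \<noteq> 0"
    using G[THEN conjunct2, THEN conjunct2, THEN conjunct1] .
  have rt0: "\<forall>i j. w i j \<noteq> 0 \<longrightarrow> w i j ^ e = 1"
    using G[THEN conjunct2, THEN conjunct2, THEN conjunct2, THEN conjunct1] .
  have pr: "(\<Prod>i\<in>?R. \<Prod>j\<in>?R. if w i j \<noteq> 0 then w i j else 1) = 1"
    using G[THEN conjunct2, THEN conjunct2, THEN conjunct2, THEN conjunct2] .
  have z: "w i j = 0" if "i \<notin> ?R \<or> j \<notin> ?R" for i j using z0 that by blast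
  have row: "\<exists>!j. j \<in> ?R \<and> w i j \<noteq> 0" if "i \<in> ?R" for i using row0 that by (rule bspec)
  have col: "\<exists>!i. i \<in> ?R \<and> w i j \<noteq> 0" if "j \<in> ?R" for j using col0 that by (rule bspec)
  have rt: "w i j ^ e = 1" if "w i j \<noteq> 0" for i j using rt0 that by blast
  define s where "s i = (THE j. j \<in> ?R \<and> w i j \<noteq> 0)" for i
  define a where "a i = w i (s i)" for i
  have s: "s i \<in> ?R \<and> w i (s i) \<noteq> 0" if i: "i \<in> ?R" for i
  proof -
    have "\<exists>!j. j \<in> ?R \<and> w i j \<noteq> 0" using row i .
    then show ?thesis unfolding s_def by (rule theI')
  qed
  have s2: "\<And>i j. i \<in> ?R \<Longrightarrow> j \<in> ?R \<Longrightarrow> w i j \<noteq> 0 \<Longrightarrow> j = s i"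
  proof -
    fix i j assume h: "i \<in> ?R" "j \<in> ?R" "w i j \<noteq> 0"
    have "(THE j. j \<in> ?R \<and> w i j \<noteq> 0) = j"
      by (rule the1_equality[OF row[OF h(1)]]) (use h in simp)
    then show "j = s i" unfolding s_def by simp
  qed
  have weq: "w = mon n s a"
  proof (intro ext)
    fix i j show "w i j = mon n s a i j"
    proof (cases "w i j = 0")
      case True
      then show ?thesis unfolding mon_def a_def using s by auto
    next
      case False
      then have "i \<in> ?R" "j \<in> ?R" using z by blast+
      then show ?thesis using s2 False unfolding mon_def a_def by simp
    qed
  qed
  have inj: "inj_on s ?R"
  proof (rule inj_onI)
    fix i i' assume h: "i \<in> ?R" "i' \<in> ?R" "s i = s i'"
    have a1: "s i \<in> ?R \<and> w i (s i) \<noteq> 0" using s[OF h(1)] .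
    have a2: "s i' \<in> ?R \<and> w i' (s i') \<noteq> 0" using s[OF h(2)] .
    have u: "\<exists>!x. x \<in> ?R \<and> w x (s i) \<noteq> 0" using col[OF conjunct1[OF a1]] .
    have "(THE x. x \<in> ?R \<and> w x (s i) \<noteq> 0) = i"
      by (rule the1_equality[OF u]) (use a1 h(1) in simp)
    moreover have "(THE x. x \<in> ?R \<and> w x (s i) \<noteq> 0) = i'"
      by (rule the1_equality[OF u]) (use a2 h(2,3) in simp)
    ultimately show "i = i'" by simp
  qed
  have surj: "s ` ?R = ?R"
  proof
    show "s ` ?R \<subseteq> ?R" using s by (simp add: image_subset_iff)
    show "?R \<subseteq> s ` ?R"
    proof
      fix j assume j: "j \<in> ?R"
      obtain i where "i \<in> ?R" "w i j \<noteq> 0" using ex1_implies_ex[OF col[OF j]] by blast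
      then show "j \<in> s ` ?R" using s2 j by blast
    qed
  qed
  have nz: "\<And>r. r \<in> ?R \<Longrightarrow> a r \<noteq> 0" using s unfolding a_def by blast
  have "prod a ?R = (\<Prod>i\<in>?R. \<Prod>j\<in>?R. if mon n s a i j \<noteq> 0 then mon n s a i j else 1)"
    using prod_mono[of s n a] surj nz by simp
  also have "\<dots> = 1" using pr[unfolded weq] .
  finally have "prod a ?R = 1" .
  moreover have "\<forall>r\<in>?R. a r ^ e = 1" using rt nz unfolding a_def by blast
  ultimately have "Valid e n s a" unfolding Valid_def bij_betw_def using inj surj by blast
  then show ?thesis using weq by blast
qed

lemma Valid_mult:
  assumes "Valid e n s a" "Valid e n t b"
  shows "Valid e n (t \<circ> s) (\<lambda>r. a r * b (s r))"
proof -
  have bs: "bij_betw s {1..n} {1..n}" and bt: "bij_betw t {1..n} {1..n}"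
    using assms unfolding Valid_def by auto
  have "bij_betw (t \<circ> s) {1..n} {1..n}" using bij_betw_trans[OF bs bt] .
  moreover have "\<forall>r\<in>{1..n}. (a r * b (s r)) ^ e = 1"
    using assms bs unfolding Valid_def bij_betw_def by (auto simp: power_mult_distrib)
  moreover have "(\<Prod>r\<in>{1..n}. a r * b (s r)) = 1"
  proof -
    have "(\<Prod>r\<in>{1..n}. b (s r)) = prod b {1..n}"
      using prod.reindex_bij_betw[OF bs, of b] by simp
    then show ?thesis using assms unfolding Valid_def by (simp add: prod.distrib)
  qed
  ultimately show ?thesis unfolding Valid_def by simp
qed



definition bt :: "nat \<Rightarrow> nat \<Rightarrow> nat \<Rightarrow> complex" where
  "bt e i r = (if r = 1 then inverse (zeta e ^ i) else if r = 2 then zeta e ^ i else 1)"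

lemma sw_range: "m \<in> {2..n} \<Longrightarrow> r \<in> {1..n} \<Longrightarrow> sw m r \<in> {1..n}"
  unfolding sw_def by auto

lemma sw_sw: "m \<ge> 2 \<Longrightarrow> sw m (sw m r) = r"
  unfolding sw_def by auto

lemma sw_bij: "m \<in> {2..n} \<Longrightarrow> bij_betw (sw m) {1..n} {1..n}"
  by (rule bij_betw_byWitness[of _ "sw m"]) (auto simp: sw_def)

lemma tgen_mon: "n \<ge> 2 \<Longrightarrow> tgen e n (int i) = mon n (sw 2) (bt e i)"
  unfolding tgen_def mon_def bt_def sw_def
  by (intro ext) (auto simp: power_int_minus)

lemma sgen_mon: "3 \<le> j \<Longrightarrow> j \<le> n \<Longrightarrow> sgen n j = mon n (sw j) (\<lambda>_. 1)"
  unfolding sgen_def mon_def sw_def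
  by (intro ext) auto

lemma Valid_t: assumes "n \<ge> 2" "e > 0" shows "Valid e n (sw 2) (bt e i)"
proof -
  have "\<forall>r\<in>{1..n}. bt e i r ^ e = 1"
  proof
    fix r
    have "(zeta e ^ i) ^ e = 1" using zeta_e[OF assms(2)]
      by (metis power_mult mult.commute power_one)
    then show "bt e i r ^ e = 1" unfolding bt_def by (auto simp: power_inverse)
  qed
  moreover have "prod (bt e i) {1..n} = 1"
  proof -
    have "prod (bt e i) {1..n} = prod (bt e i) {1,2}"
      using assms(1) by (intro prod.mono_neutral_right) (auto simp: bt_def)
    then show ?thesis by (simp add: bt_def)
  qed
  ultimately show ?thesis unfolding Valid_def using sw_bij[of 2 n] assms by auto
qed

lemma Valid_s: assumes "m \<in> {2..n}" shows "Valid e n (sw m) (\<lambda>_. 1)"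
  unfolding Valid_def using sw_bij[OF assms] by auto

lemma gens_cases:
  assumes "g \<in> gens e n" "n \<ge> 2" "e > 0"
  obtains m b where "m \<in> {2..n}" "g = mon n (sw m) b" "Valid e n (sw m) b"
    "\<And>r. r \<in> {1..n} \<Longrightarrow> r \<noteq> m - 1 \<Longrightarrow> r \<noteq> m \<Longrightarrow> b r = 1"
    "m \<ge> 3 \<Longrightarrow> b = (\<lambda>_. 1)"
    "\<And>r. r \<in> {1..n} \<Longrightarrow> b r * b (sw m r) = 1"
proof -
  from assms(1) consider (t) i where "i < e" "g = tgen e n (int i)"
    | (s) j where "3 \<le> j" "j \<le> n" "g = sgen n j"
    unfolding gens_def by auto
  then show ?thesis
  proof cases
    case t
    show ?thesis
    proof (rule that[of 2 "bt e i"])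
      show "g = mon n (sw 2) (bt e i)" using t tgen_mon assms by simp
      show "Valid e n (sw 2) (bt e i)" using Valid_t assms by simp
      fix r assume "r \<in> {1..n}"
      then show "bt e i r * bt e i (sw 2 r) = 1" unfolding bt_def sw_def by auto
    qed (use assms in \<open>auto simp: bt_def\<close>)
  next
    case s
    show ?thesis
      by (rule that[of j "\<lambda>_. 1"]) (use s sgen_mon Valid_s in auto)
  qed
qed

definition dl :: "nat \<Rightarrow> nat \<Rightarrow> nat \<Rightarrow> nat \<Rightarrow> complex" where
  "dl e n k r = (if r = 1 then inverse (zeta e ^ (n - 1)) ^ k else zeta e ^ k)"

lemma lam_pow: assumes "n \<ge> 1" shows "mpow n (lam e n) k = mon n id (dl e n k)"
proof (induction k)
  case 0
  then show ?case unfolding mpow_def idm_mono by (simp, rule mon_cong) (simp add: dl_def)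
next
  case (Suc k)
  have l: "lam e n = mon n id (dl e n 1)"
    unfolding lam_def mon_def dl_def using assms by (intro ext) auto
  have "mpow n (lam e n) (Suc k) = mmult n (lam e n) (mpow n (lam e n) k)"
    unfolding mpow_def by simp
  also have "\<dots> = mon n id (\<lambda>r. dl e n 1 r * dl e n k r)"
  proof -
    have "mmult n (lam e n) (mpow n (lam e n) k) = mmult n (mon n id (dl e n 1)) (mon n id (dl e n k))"
      using Suc.IH l by (simp add: id_def)
    also have "\<dots> = mon n id (\<lambda>r. dl e n 1 r * dl e n k r)"
      by (subst mon_mult) auto
    finally show ?thesis .
  qed
  also have "\<dots> = mon n id (dl e n (Suc k))"
    by (rule mon_cong) (auto simp: dl_def)
  finally show ?case .
qed

lemma Valid_dl: assumes "e > 0" "n \<ge> 1" shows "Valid e n id (dl e n k)"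
proof -
  have ze: "zeta e ^ e = 1" using zeta_e[OF assms(1)] .
  have "\<forall>r\<in>{1..n}. dl e n k r ^ e = 1"
  proof
    fix r
    have "(zeta e ^ k) ^ e = 1" using ze by (metis power_mult mult.commute power_one)
    moreover have "(inverse (zeta e ^ (n - 1)) ^ k) ^ e = 1" using ze
      by (metis power_mult mult.commute power_one power_inverse inverse_1)
    ultimately show "dl e n k r ^ e = 1" unfolding dl_def by auto
  qed
  moreover have "prod (dl e n k) {1..n} = 1"
  proof -
    have "{1..n} = insert 1 {2..n}" using assms(2) by auto
    then have "prod (dl e n k) {1..n} = dl e n k 1 * prod (dl e n k) {2..n}" by simp
    also have "prod (dl e n k) {2..n} = (zeta e ^ k) ^ (n - 1)"
      by (simp add: dl_def)
    finally show ?thesis unfolding dl_def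
      by (simp add: power_mult[symmetric] mult.commute power_inverse)
  qed
  ultimately show ?thesis unfolding Valid_def by auto
qed

lemma ginv_mon:
  assumes V: "Valid e n s a" and e: "e > 0"
  shows "ginv e n (mon n s a) = mon n (inv_into {1..n} s) (\<lambda>r. inverse (a (inv_into {1..n} s r)))"
    (is "_ = mon n ?si ?ai")
proof -
  let ?R = "{1..n}"
  have b: "bij_betw s ?R ?R" using V unfolding Valid_def by auto
  have bi: "bij_betw ?si ?R ?R" using bij_betw_inv_into[OF b] .
  have nz: "\<And>r. r \<in> ?R \<Longrightarrow> a r \<noteq> 0" using Valid_nz[OF V e] .
  have im: "s ` ?R \<subseteq> ?R" using b by (simp add: bij_betw_def)
  have imi: "?si ` ?R \<subseteq> ?R" using bi by (simp add: bij_betw_def)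
  have Vi: "Valid e n ?si ?ai"
  proof -
    have "\<forall>r\<in>?R. ?ai r ^ e = 1"
    proof
      fix r assume "r \<in> ?R"
      then have "?si r \<in> ?R" using imi by blast
      then show "?ai r ^ e = 1" using V unfolding Valid_def by (simp add: power_inverse)
    qed
    moreover have "prod ?ai ?R = 1"
    proof -
      have "prod ?ai ?R = inverse (\<Prod>r\<in>?R. a (?si r))"
        using prod_inversef[of "\<lambda>r. a (?si r)" ?R] by (simp add: comp_def)
      also have "(\<Prod>r\<in>?R. a (?si r)) = prod a ?R"
        using prod.reindex_bij_betw[OF bi, of a] by simp
      finally show ?thesis using V unfolding Valid_def by simp
    qed
    ultimately show ?thesis unfolding Valid_def using bi by auto
  qed
  have prod1: "mmult n (mon n s a) (mon n ?si ?ai) = idm n"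
  proof -
    have "mmult n (mon n s a) (mon n ?si ?ai) = mon n (?si \<circ> s) (\<lambda>r. a r * ?ai (s r))"
      using mon_mult[OF im] .
    also have "\<dots> = mon n id (\<lambda>_. 1)"
      by (rule mon_cong) (use nz bij_betw_inv_into_left[OF b] in auto)
    finally show ?thesis by (simp add: idm_mono)
  qed
  show ?thesis unfolding ginv_def
  proof (rule the_equality)
    show "mon n ?si ?ai \<in> Geen e n \<and> mmult n (mon n s a) (mon n ?si ?ai) = idm n"
      using Valid_Geen[OF Vi e] prod1 by simp
    fix u assume u: "u \<in> Geen e n \<and> mmult n (mon n s a) u = idm n"
    then obtain t c where Vt: "Valid e n t c" and ueq: "u = mon n t c" using Geen_Valid by blast
    have eq: "mon n (t \<circ> s) (\<lambda>r. a r * c (s r)) = mon n id (\<lambda>_. 1)"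
      using mon_mult[OF im, of a t c] u ueq by (simp add: idm_mono)
    have h: "t (s r) = r \<and> a r * c (s r) = 1" if r: "r \<in> ?R" for r
    proof -
      have "s r \<in> ?R" using im r by blast
      then have "a r * c (s r) \<noteq> 0" using nz[OF r] Valid_nz[OF Vt e] by simp
      from mon_inj[OF eq r this] show ?thesis by simp
    qed
    show "u = mon n ?si ?ai" unfolding ueq
    proof (rule mon_cong)
      fix r assume r: "r \<in> ?R"
      have r': "?si r \<in> ?R" using imi r by blast
      have sr: "s (?si r) = r" using bij_betw_inv_into_right[OF b r] .
      show "t r = ?si r \<and> c r = ?ai r"
      proof
        show "t r = ?si r" using h[OF r'] sr by simp
        have "a (?si r) * c r = 1" using h[OF r'] sr by simp
        then show "c r = ?ai r" using inverse_unique[of "a (?si r)" "c r"] by simp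
      qed
    qed
  qed
qed



definition Pairs :: "nat \<Rightarrow> (nat \<times> nat) set" where
  "Pairs n = {(p,q). p \<in> {1..n} \<and> q \<in> {1..n} \<and> p < q}"
definition Inv :: "nat \<Rightarrow> (nat \<Rightarrow> nat) \<Rightarrow> (nat \<times> nat) set" where
  "Inv n s = {x \<in> Pairs n. s (snd x) < s (fst x)}"
definition NI :: "nat \<Rightarrow> (nat \<Rightarrow> nat) \<Rightarrow> (nat \<Rightarrow> complex) \<Rightarrow> (nat \<times> nat) set" where
  "NI n s a = {x \<in> Pairs n. s (fst x) < s (snd x) \<and> a (snd x) \<noteq> 1}"
definition Fsa :: "nat \<Rightarrow> (nat \<Rightarrow> nat) \<Rightarrow> (nat \<Rightarrow> complex) \<Rightarrow> nat" where
  "Fsa n s a = card (Inv n s) + 2 * card (NI n s a)"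
definition H :: "nat \<Rightarrow> nat \<Rightarrow> complex \<Rightarrow> nat" where
  "H x y z = (if y < x then 1 else if x < y \<and> z \<noteq> 1 then 2 else 0)"

lemma finite_Pairs[simp]: "finite (Pairs n)"
proof -
  have "Pairs n \<subseteq> {1..n} \<times> {1..n}" unfolding Pairs_def by auto
  then show ?thesis by (rule finite_subset) simp
qed

lemma finite_Inv[simp]: "finite (Inv n s)" unfolding Inv_def by simp
lemma finite_NI[simp]: "finite (NI n s a)" unfolding NI_def by simp

lemma Fsa_cong:
  assumes "\<And>r. r \<in> {1..n} \<Longrightarrow> s r = s' r \<and> a r = a' r"
  shows "Fsa n s a = Fsa n s' a'"
proof -
  have "Inv n s = Inv n s'" unfolding Inv_def Pairs_def using assms by auto
  moreover have "NI n s a = NI n s' a'" unfolding NI_def Pairs_def using assms by auto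
  ultimately show ?thesis unfolding Fsa_def by simp
qed

lemma card_split: "finite A \<Longrightarrow> card A = card (A - {x}) + (if x \<in> A then 1 else 0)"
  using card_Suc_Diff1[of A x] by (cases "x \<in> A") auto

lemma sw_mono:
  assumes "m \<in> {2..n}" "p \<in> {1..n}" "q \<in> {1..n}" "p < q" "(p,q) \<noteq> (m - 1, m)"
  shows "sw m p < sw m q"
  using assms unfolding sw_def by auto

definition pis :: "nat \<Rightarrow> nat \<times> nat \<Rightarrow> nat \<times> nat" where
  "pis m x = (sw m (fst x), sw m (snd x))"

lemma pis_pairs:
  assumes "m \<in> {2..n}" "x \<in> Pairs n - {(m - 1, m)}"
  shows "pis m x \<in> Pairs n - {(m - 1, m)}" "pis m (pis m x) = x"
proof -
  obtain p q where x: "x = (p,q)" by (cases x)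
  have pq: "p \<in> {1..n}" "q \<in> {1..n}" "p < q" "(p,q) \<noteq> (m - 1, m)"
    using assms(2) x unfolding Pairs_def by auto
  have "sw m p < sw m q" using sw_mono[OF assms(1) pq] .
  moreover have "sw m p \<in> {1..n}" "sw m q \<in> {1..n}" using sw_range assms(1) pq by auto
  moreover have "(sw m p, sw m q) \<noteq> (m - 1, m)"
    using pq assms(1) unfolding sw_def by auto
  ultimately show "pis m x \<in> Pairs n - {(m - 1, m)}" unfolding pis_def Pairs_def x by auto
  show "pis m (pis m x) = x" unfolding pis_def x using assms(1) by (simp add: sw_sw)
qed

lemma swap_card:
  assumes m: "m \<in> {2..n}"
    and P: "\<And>x. x \<in> Pairs n - {(m - 1, m)} \<Longrightarrow> x \<in> A \<longleftrightarrow> pis m x \<in> B"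
    and AB: "A \<subseteq> Pairs n" "B \<subseteq> Pairs n"
  shows "card (A - {(m - 1, m)}) = card (B - {(m - 1, m)})"
proof -
  let ?x = "(m - 1, m)"
  have PA: "x \<in> Pairs n - {?x}" if "x \<in> A - {?x}" for x using that AB by blast
  have PB: "x \<in> Pairs n - {?x}" if "x \<in> B - {?x}" for x using that AB by blast
  have "bij_betw (pis m) (A - {?x}) (B - {?x})"
  proof (rule bij_betw_byWitness[of _ "pis m"])
    show "\<forall>a\<in>A - {?x}. pis m (pis m a) = a"
    proof
      fix a assume "a \<in> A - {?x}"
      from pis_pairs(2)[OF m PA[OF this]] show "pis m (pis m a) = a" .
    qed
    show "\<forall>a\<in>B - {?x}. pis m (pis m a) = a"
    proof
      fix a assume "a \<in> B - {?x}"
      from pis_pairs(2)[OF m PB[OF this]] show "pis m (pis m a) = a" .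
    qed
    show "pis m ` (A - {?x}) \<subseteq> B - {?x}"
    proof
      fix y assume "y \<in> pis m ` (A - {?x})"
      then obtain x where x: "x \<in> A - {?x}" "y = pis m x" by blast
      have xp: "x \<in> Pairs n - {?x}" using PA[OF x(1)] .
      have "pis m x \<in> Pairs n - {?x}" using pis_pairs(1)[OF m xp] .
      moreover have "pis m x \<in> B" using P[OF xp] x(1) by blast
      ultimately show "y \<in> B - {?x}" using x(2) by simp
    qed
    show "pis m ` (B - {?x}) \<subseteq> A - {?x}"
    proof
      fix y assume "y \<in> pis m ` (B - {?x})"
      then obtain x where x: "x \<in> B - {?x}" "y = pis m x" by blast
      have xp: "x \<in> Pairs n - {?x}" using PB[OF x(1)] .
      have yp: "y \<in> Pairs n - {?x}" using pis_pairs(1)[OF m xp] x(2) by simp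
      have "pis m y = x" using pis_pairs(2)[OF m xp] x(2) by simp
      then have "y \<in> A" using P[OF yp] x(1) by simp
      then show "y \<in> A - {?x}" using yp by blast
    qed
  qed
  then show ?thesis by (rule bij_betw_same_card)
qed

lemma swap_Fsa:
  assumes m: "m \<in> {2..n}" and inj: "inj_on s {1..n}"
    and a': "\<And>p q. (p,q) \<in> Pairs n - {(m - 1, m)} \<Longrightarrow> a' q = a (sw m q)"
  shows "Fsa n (s \<circ> sw m) a' + H (s (m - 1)) (s m) (a m)
       = Fsa n s a + H (s m) (s (m - 1)) (a' m)"
proof -
  let ?x = "(m - 1, m)"
  have x0: "?x \<in> Pairs n" using m unfolding Pairs_def by auto
  have ne: "s (m - 1) \<noteq> s m"
  proof
    assume h: "s (m - 1) = s m"
    have "m - 1 \<in> {1..n}" "m \<in> {1..n}" using m by auto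
    then have "m - 1 = m" using inj_onD[OF inj h] by blast
    then show False using m by auto
  qed
  have swa: "sw m (m - 1) = m" "sw m m = m - 1" using m unfolding sw_def by auto
  have c1: "card (Inv n (s \<circ> sw m) - {?x}) = card (Inv n s - {?x})"
  proof (rule swap_card[OF m])
    fix x assume x: "x \<in> Pairs n - {?x}"
    have "pis m x \<in> Pairs n" using pis_pairs(1)[OF m x] by blast
    then show "x \<in> Inv n (s \<circ> sw m) \<longleftrightarrow> pis m x \<in> Inv n s"
      using x unfolding Inv_def pis_def by simp
  qed (simp_all add: Inv_def)
  have c2: "card (NI n (s \<circ> sw m) a' - {?x}) = card (NI n s a - {?x})"
  proof (rule swap_card[OF m])
    fix x assume x: "x \<in> Pairs n - {?x}"
    obtain p q where xx: "x = (p,q)" by (cases x)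
    have "pis m x \<in> Pairs n" using pis_pairs(1)[OF m x] by blast
    moreover have "a' q = a (sw m q)" using a' x xx by blast
    ultimately show "x \<in> NI n (s \<circ> sw m) a' \<longleftrightarrow> pis m x \<in> NI n s a"
      using x unfolding NI_def pis_def xx by simp
  qed (simp_all add: NI_def)
  have i1: "?x \<in> Inv n (s \<circ> sw m) \<longleftrightarrow> s (m - 1) < s m" using x0 swa by (simp add: Inv_def)
  have i2: "?x \<in> Inv n s \<longleftrightarrow> s m < s (m - 1)" using x0 by (simp add: Inv_def)
  have n1: "?x \<in> NI n (s \<circ> sw m) a' \<longleftrightarrow> s m < s (m - 1) \<and> a' m \<noteq> 1"
    using x0 swa by (simp add: NI_def)
  have n2: "?x \<in> NI n s a \<longleftrightarrow> s (m - 1) < s m \<and> a m \<noteq> 1" using x0 by (simp add: NI_def)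
  have e1: "card (Inv n (s \<circ> sw m)) = card (Inv n s - {?x}) + (if s (m - 1) < s m then 1 else 0)"
    using card_split[of "Inv n (s \<circ> sw m)" ?x] c1 i1 by simp
  have e2: "card (Inv n s) = card (Inv n s - {?x}) + (if s m < s (m - 1) then 1 else 0)"
    using card_split[of "Inv n s" ?x] i2 by simp
  have e3: "card (NI n (s \<circ> sw m) a') = card (NI n s a - {?x}) + (if s m < s (m - 1) \<and> a' m \<noteq> 1 then 1 else 0)"
    using card_split[of "NI n (s \<circ> sw m) a'" ?x] c2 n1 by simp
  have e4: "card (NI n s a) = card (NI n s a - {?x}) + (if s (m - 1) < s m \<and> a m \<noteq> 1 then 1 else 0)"
    using card_split[of "NI n s a" ?x] n2 by simp
  show ?thesis
    unfolding Fsa_def e1 e2 e3 e4 H_def using ne by auto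
qed



lemma H_diff: "x \<noteq> y \<Longrightarrow> H y x z2 \<le> H x y z1 + 1"
  unfolding H_def by auto

lemma Fsa_id: "Fsa n id (\<lambda>_. 1) = 0"
proof -
  have "Inv n id = {}" unfolding Inv_def Pairs_def by auto
  moreover have "NI n id (\<lambda>_. 1) = {}" unfolding NI_def by auto
  ultimately show ?thesis unfolding Fsa_def by simp
qed

lemma Valid_id: "Valid e n id (\<lambda>_. 1)"
  unfolding Valid_def by simp

lemma wprod_Cons: "wprod n (g # ws) = mmult n g (wprod n ws)"
  unfolding wprod_def by simp

lemma wprod_Geen:
  assumes "set ws \<subseteq> gens e n" "n \<ge> 2" "e > 0"
  shows "wprod n ws \<in> Geen e n"
  using assms(1)
proof (induction ws)
  case Nil
  then show ?case using Valid_Geen[OF Valid_id assms(3)] by (simp add: wprod_def idm_mono)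
next
  case (Cons g ws)
  then have g: "g \<in> gens e n" and ws: "wprod n ws \<in> Geen e n" by auto
  obtain m b where m: "m \<in> {2..n}" and geq: "g = mon n (sw m) b" and Vb: "Valid e n (sw m) b"
    using gens_cases[OF g assms(2,3)] by metis
  obtain s a where Vs: "Valid e n s a" and weq: "wprod n ws = mon n s a"
    using Geen_Valid[OF ws] by blast
  have im: "sw m ` {1..n} \<subseteq> {1..n}" using sw_range[OF m] by blast
  have "wprod n (g # ws) = mon n (s \<circ> sw m) (\<lambda>r. b r * a (sw m r))"
    unfolding wprod_Cons geq weq using mon_mult[OF im] .
  then show ?case using Valid_Geen[OF Valid_mult[OF Vb Vs] assms(3)] by simp
qed

lemma a'_cond:
  fixes a b :: "nat \<Rightarrow> complex"
  assumes m: "m \<in> {2..n}"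
    and b1: "\<And>r. r \<in> {1..n} \<Longrightarrow> r \<noteq> m - 1 \<Longrightarrow> r \<noteq> m \<Longrightarrow> b r = 1"
    and b3: "m \<ge> 3 \<Longrightarrow> b = (\<lambda>_. 1)"
    and pq: "(p,q) \<in> Pairs n - {(m - 1, m)}"
  shows "b q * a (sw m q) = a (sw m q)"
proof (cases "m \<ge> 3")
  case True
  then show ?thesis using b3 by simp
next
  case False
  then have "m = 2" using m by auto
  then have "q \<noteq> 1" "q \<noteq> 2" "q \<in> {1..n}" using pq unfolding Pairs_def by auto
  then show ?thesis using b1[of q] \<open>m = 2\<close> by simp
qed

lemma inj_ne:
  assumes "Valid e n s a" "m \<in> {2..n}"
  shows "s (m - 1) \<noteq> s m"
proof
  assume h: "s (m - 1) = s m"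
  have inj: "inj_on s {1..n}" using assms(1) unfolding Valid_def bij_betw_def by simp
  have "m - 1 \<in> {1..n}" "m \<in> {1..n}" using assms(2) by auto
  then have "m - 1 = m" using inj_onD[OF inj h] by blast
  then show False using assms(2) by auto
qed

lemma LB:
  assumes "n \<ge> 2" "e > 0"
  shows "set ws \<subseteq> gens e n \<Longrightarrow> Valid e n s a \<Longrightarrow> wprod n ws = mon n s a \<Longrightarrow> Fsa n s a \<le> length ws"
proof (induction ws arbitrary: s a)
  case Nil
  have eq: "mon n id (\<lambda>_. 1) = mon n s a" using Nil.prems(3) by (simp add: wprod_def idm_mono)
  have "Fsa n s a = Fsa n id (\<lambda>_. 1)"
  proof (rule Fsa_cong)
    fix r assume "r \<in> {1..n}"
    from mon_inj[OF eq this] show "s r = id r \<and> a r = 1" by simp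
  qed
  then show ?case by (simp add: Fsa_id)
next
  case (Cons g ws)
  then have g: "g \<in> gens e n" and wsg: "set ws \<subseteq> gens e n" by auto
  obtain m b where m: "m \<in> {2..n}" and geq: "g = mon n (sw m) b" and Vb: "Valid e n (sw m) b"
    and b1: "\<And>r. r \<in> {1..n} \<Longrightarrow> r \<noteq> m - 1 \<Longrightarrow> r \<noteq> m \<Longrightarrow> b r = 1"
    and b3: "m \<ge> 3 \<Longrightarrow> b = (\<lambda>_. 1)"
    using gens_cases[OF g assms] by metis
  obtain s0 a0 where V0: "Valid e n s0 a0" and weq: "wprod n ws = mon n s0 a0"
    using Geen_Valid[OF wprod_Geen[OF wsg assms]] by blast
  have IH: "Fsa n s0 a0 \<le> length ws" using Cons.IH[OF wsg V0 weq] .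
  have im: "sw m ` {1..n} \<subseteq> {1..n}" using sw_range[OF m] by blast
  have "mon n (s0 \<circ> sw m) (\<lambda>r. b r * a0 (sw m r)) = mon n s a"
    using Cons.prems(3) unfolding wprod_Cons geq weq mon_mult[OF im] .
  then have "Fsa n s a = Fsa n (s0 \<circ> sw m) (\<lambda>r. b r * a0 (sw m r))"
  proof (intro Fsa_cong)
    fix r assume eq: "mon n (s0 \<circ> sw m) (\<lambda>r. b r * a0 (sw m r)) = mon n s a" and r: "r \<in> {1..n}"
    have "sw m r \<in> {1..n}" using sw_range[OF m r] .
    then have "b r * a0 (sw m r) \<noteq> 0" using Valid_nz[OF Vb assms(2) r] Valid_nz[OF V0 assms(2)] by simp
    from mon_inj[OF eq r this] show "s r = (s0 \<circ> sw m) r \<and> a r = b r * a0 (sw m r)" by simp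
  qed
  moreover have inj0: "inj_on s0 {1..n}" using V0 unfolding Valid_def bij_betw_def by simp
  have sw: "Fsa n (s0 \<circ> sw m) (\<lambda>r. b r * a0 (sw m r)) + H (s0 (m - 1)) (s0 m) (a0 m)
       = Fsa n s0 a0 + H (s0 m) (s0 (m - 1)) (b m * a0 (sw m m))"
    using swap_Fsa[OF m inj0, of "\<lambda>r. b r * a0 (sw m r)" a0] a'_cond[OF m b1 b3] by simp
  have "H (s0 m) (s0 (m - 1)) (b m * a0 (sw m m)) \<le> H (s0 (m - 1)) (s0 m) (a0 m) + 1"
    using H_diff inj_ne[OF V0 m] by blast
  ultimately show ?case using sw IH by simp
qed



lemma incr_id:
  fixes s :: "nat \<Rightarrow> nat" and n :: nat
  assumes inc: "\<And>r. 2 \<le> r \<Longrightarrow> r \<le> n \<Longrightarrow> s (r - 1) < s r"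
    and im: "\<And>r. r \<in> {1..n} \<Longrightarrow> s r \<in> {1..n}"
  shows "r \<in> {1..n} \<Longrightarrow> s r = r"
proof -
  have ge: "x \<le> n \<Longrightarrow> x \<ge> 1 \<Longrightarrow> s x \<ge> x" for x :: nat
  proof (induction x)
    case 0 then show ?case by simp
  next
    case (Suc x)
    show ?case
    proof (cases "x = 0")
      case True
      then show ?thesis using im[of 1] Suc by simp
    next
      case False
      then have "s x \<ge> x" using Suc by simp
      moreover have "s x < s (Suc x)" using inc[of "Suc x"] Suc False by simp
      ultimately show ?thesis by simp
    qed
  qed
  have le: "k < n \<Longrightarrow> s (n - k) \<le> n - k" for k :: nat
  proof (induction k)
    case 0 then show ?case using im[of n] by simp
  next
    case (Suc k)
    have h1: "2 \<le> n - k" "n - k \<le> n" using Suc.prems by auto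
    have h2: "n - k - 1 = n - Suc k" by simp
    have "s (n - Suc k) < s (n - k)" using inc[OF h1] h2 by simp
    moreover have "s (n - k) \<le> n - k" using Suc by simp
    ultimately show ?case using h1 by simp
  qed
  assume r: "r \<in> {1..n}"
  have "s r \<le> r" using le[of "n - r"] r by simp
  then show "s r = r" using ge[of r] r by simp
qed

lemma tgen_in: "i < e \<Longrightarrow> tgen e n (int i) \<in> gens e n"
  unfolding gens_def by blast

lemma sgen_in: "3 \<le> j \<Longrightarrow> j \<le> n \<Longrightarrow> sgen n j \<in> gens e n"
  unfolding gens_def by blast

lemma bt_prop: "n \<ge> 2 \<Longrightarrow> r \<in> {1..n} \<Longrightarrow> bt e i r * bt e i (sw 2 r) = 1"
  unfolding bt_def sw_def by auto

lemma descent: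
  assumes V: "Valid e n s a" and n: "n \<ge> 2" and e: "e > 0"
    and nid: "\<not> (\<forall>r\<in>{1..n}. s r = r \<and> a r = 1)"
  shows "\<exists>m b. m \<in> {2..n} \<and> mon n (sw m) b \<in> gens e n \<and> Valid e n (sw m) b
     \<and> (\<forall>r\<in>{1..n}. b r * b (sw m r) = 1)
     \<and> Fsa n (s \<circ> sw m) (\<lambda>r. b r * a (sw m r)) + 1 = Fsa n s a"
proof -
  have inj: "inj_on s {1..n}" using V unfolding Valid_def bij_betw_def by simp
  have im: "\<And>r. r \<in> {1..n} \<Longrightarrow> s r \<in> {1..n}" using V unfolding Valid_def bij_betw_def by blast
  have two: "2 \<in> {2..n}" using n by simp
  have ne12: "s 1 \<noteq> s 2" using inj_ne[OF V two] by simp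
  have gen: "Fsa n (s \<circ> sw m) (\<lambda>r. b r * a (sw m r)) + H (s (m - 1)) (s m) (a m)
       = Fsa n s a + H (s m) (s (m - 1)) (b m * a (m - 1))"
    if m: "m \<in> {2..n}" and b1: "\<And>r. r \<in> {1..n} \<Longrightarrow> r \<noteq> m - 1 \<Longrightarrow> r \<noteq> m \<Longrightarrow> b r = 1"
      and b3: "m \<ge> 3 \<Longrightarrow> b = (\<lambda>_. 1)" for m b
  proof -
    have "sw m m = m - 1" unfolding sw_def by simp
    then show ?thesis
      using swap_Fsa[OF m inj, of "\<lambda>r. b r * a (sw m r)" a] a'_cond[OF m b1 b3] by simp
  qed
  show ?thesis
  proof (cases "s 2 < s 1")
    case True
    have "a 1 ^ e = 1" using V n unfolding Valid_def by simp
    then obtain j where j: "j < e" "a 1 = zeta e ^ j" using root_is_zeta_pow[OF e] by blast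
    define i where "i = (e - j) mod e"
    have ie: "i < e" unfolding i_def using e by simp
    have zi: "zeta e ^ i * a 1 = 1"
    proof (cases "j = 0")
      case True then show ?thesis using j i_def by simp
    next
      case False
      then have "i + j = e" unfolding i_def using j by simp
      then show ?thesis using j zeta_e[OF e] by (metis power_add)
    qed
    let ?b = "bt e i"
    have b1: "\<And>r. r \<in> {1..n} \<Longrightarrow> r \<noteq> 2 - 1 \<Longrightarrow> r \<noteq> 2 \<Longrightarrow> ?b r = 1" unfolding bt_def by simp
    have "Fsa n (s \<circ> sw 2) (\<lambda>r. ?b r * a (sw 2 r)) + H (s (2 - 1)) (s 2) (a 2)
       = Fsa n s a + H (s 2) (s (2 - 1)) (?b 2 * a (2 - 1))"
      using gen[OF two b1] by simp
    moreover have "?b 2 * a (2 - 1) = 1" using zi unfolding bt_def by simp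
    ultimately have "Fsa n (s \<circ> sw 2) (\<lambda>r. ?b r * a (sw 2 r)) + 1 = Fsa n s a"
      using True unfolding H_def by simp
    moreover have "mon n (sw 2) ?b \<in> gens e n" using tgen_in[OF ie] tgen_mon[OF n] by metis
    ultimately show ?thesis using two Valid_t[OF n e] bt_prop[OF n]
      by (intro exI[of _ 2] exI[of _ ?b] conjI) simp_all
  next
    case False
    then have lt12: "s 1 < s 2" using ne12 by simp
    show ?thesis
    proof (cases "a 2 = 1")
      case False
      let ?b = "bt e 0"
      have b1: "\<And>r. r \<in> {1..n} \<Longrightarrow> r \<noteq> 2 - 1 \<Longrightarrow> r \<noteq> 2 \<Longrightarrow> ?b r = 1" unfolding bt_def by simp
      have "Fsa n (s \<circ> sw 2) (\<lambda>r. ?b r * a (sw 2 r)) + H (s (2 - 1)) (s 2) (a 2)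
         = Fsa n s a + H (s 2) (s (2 - 1)) (?b 2 * a (2 - 1))"
        using gen[OF two b1] by simp
      then have "Fsa n (s \<circ> sw 2) (\<lambda>r. ?b r * a (sw 2 r)) + 1 = Fsa n s a"
        using lt12 False unfolding H_def by simp
      moreover have "mon n (sw 2) ?b \<in> gens e n" using tgen_in[OF e] tgen_mon[OF n] by metis
      ultimately show ?thesis using two Valid_t[OF n e] bt_prop[OF n]
        by (intro exI[of _ 2] exI[of _ ?b] conjI) simp_all
    next
      case True
      have "\<exists>m. 3 \<le> m \<and> m \<le> n \<and> ((s (m - 1) < s m \<and> a m \<noteq> 1) \<or> (s m < s (m - 1) \<and> a (m - 1) = 1))"
      proof (rule ccontr)
        assume nex: "\<not> ?thesis"
        have step: "2 \<le> r \<Longrightarrow> r \<le> n \<Longrightarrow> s (r - 1) < s r \<and> a r = 1" for r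
        proof (induction r rule: nat_induct_at_least)
          case base then show ?case using lt12 True by simp
        next
          case (Suc r)
          have mm: "Suc r \<in> {2..n}" using Suc by simp
          have ne: "s r \<noteq> s (Suc r)" using inj_ne[OF V mm] by simp
          have ih: "s (r - 1) < s r \<and> a r = 1" using Suc by simp
          have m3: "3 \<le> Suc r" "Suc r \<le> n" using Suc by auto
          have "\<not> ((s (Suc r - 1) < s (Suc r) \<and> a (Suc r) \<noteq> 1) \<or> (s (Suc r) < s (Suc r - 1) \<and> a (Suc r - 1) = 1))"
            using nex m3 by blast
          then have "\<not> ((s r < s (Suc r) \<and> a (Suc r) \<noteq> 1) \<or> (s (Suc r) < s r \<and> a r = 1))"
            by simp
          then show ?case using ne ih by auto
        qed
        have sid: "s r = r" if "r \<in> {1..n}" for r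
          using incr_id[of n s, OF _ im that] step by blast
        have a1: "a r = 1" if "r \<in> {2..n}" for r using step that by simp
        have "prod a {1..n} = a 1 * prod a {2..n}"
        proof -
          have "{1..n} = insert 1 {2..n}" using n by auto
          then show ?thesis by simp
        qed
        moreover have "prod a {2..n} = 1" using a1 by simp
        ultimately have "a 1 = 1" using V unfolding Valid_def by simp
        have "\<forall>r\<in>{1..n}. s r = r \<and> a r = 1"
        proof
          fix r assume r: "r \<in> {1..n}"
          show "s r = r \<and> a r = 1"
          proof (cases "r = 1")
            case True then show ?thesis using sid r \<open>a 1 = 1\<close> by simp
          next
            case False then have "r \<in> {2..n}" using r by auto
            then show ?thesis using sid r a1 by simp
          qed
        qed
        then show False using nid by blast
      qed
      then obtain m where m3: "3 \<le> m" "m \<le> n"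
        and c: "(s (m - 1) < s m \<and> a m \<noteq> 1) \<or> (s m < s (m - 1) \<and> a (m - 1) = 1)" by blast
      have m: "m \<in> {2..n}" using m3 by simp
      let ?b = "\<lambda>_::nat. 1::complex"
      have "Fsa n (s \<circ> sw m) (\<lambda>r. ?b r * a (sw m r)) + H (s (m - 1)) (s m) (a m)
         = Fsa n s a + H (s m) (s (m - 1)) (?b m * a (m - 1))"
        using gen[OF m, of ?b] by simp
      then have "Fsa n (s \<circ> sw m) (\<lambda>r. ?b r * a (sw m r)) + 1 = Fsa n s a"
        using c unfolding H_def by auto
      moreover have "mon n (sw m) ?b \<in> gens e n" using sgen_in[OF m3] sgen_mon[OF m3] by metis
      ultimately show ?thesis using m Valid_s[OF m]
        by (intro exI[of _ m] exI[of _ ?b] conjI) simp_all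
    qed
  qed
qed



lemma UB:
  assumes n: "n \<ge> 2" and e: "e > 0"
  shows "Valid e n s a \<Longrightarrow> \<exists>ws. set ws \<subseteq> gens e n \<and> length ws = Fsa n s a \<and> wprod n ws = mon n s a"
proof (induction "Fsa n s a" arbitrary: s a rule: less_induct)
  case less
  note V = less.prems
  show ?case
  proof (cases "\<forall>r\<in>{1..n}. s r = r \<and> a r = 1")
    case True
    have "Fsa n s a = Fsa n id (\<lambda>_. 1)" by (rule Fsa_cong) (use True in simp)
    moreover have "mon n s a = idm n" unfolding idm_mono by (rule mon_cong) (use True in simp)
    ultimately show ?thesis using Fsa_id by (intro exI[of _ "[]"]) (simp add: wprod_def)
  next
    case False
    obtain m b where m: "m \<in> {2..n}" and g: "mon n (sw m) b \<in> gens e n" and Vb: "Valid e n (sw m) b"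
      and bb: "\<forall>r\<in>{1..n}. b r * b (sw m r) = 1"
      and F: "Fsa n (s \<circ> sw m) (\<lambda>r. b r * a (sw m r)) + 1 = Fsa n s a"
      using descent[OF V n e False] by blast
    let ?s = "s \<circ> sw m" and ?a = "\<lambda>r. b r * a (sw m r)"
    have V': "Valid e n ?s ?a" using Valid_mult[OF Vb V] .
    have "Fsa n ?s ?a < Fsa n s a" using F by simp
    then obtain ws where ws: "set ws \<subseteq> gens e n" "length ws = Fsa n ?s ?a" "wprod n ws = mon n ?s ?a"
      using less.hyps V' by blast
    have im: "sw m ` {1..n} \<subseteq> {1..n}" using sw_range[OF m] by blast
    have "wprod n (mon n (sw m) b # ws) = mon n (?s \<circ> sw m) (\<lambda>r. b r * ?a (sw m r))"
      unfolding wprod_Cons ws(3) using mon_mult[OF im] .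
    also have "\<dots> = mon n s a"
    proof (rule mon_cong)
      fix r assume r: "r \<in> {1..n}"
      have "sw m (sw m r) = r" using m sw_sw by simp
      moreover have "b r * b (sw m r) = 1" using bb r by blast
      ultimately show "(?s \<circ> sw m) r = s r \<and> b r * ?a (sw m r) = a r"
        by (simp add: mult.assoc[symmetric])
    qed
    finally show ?thesis using ws g F
      by (intro exI[of _ "mon n (sw m) b # ws"]) simp
  qed
qed

lemma wlen_mon:
  assumes V: "Valid e n s a" and n: "n \<ge> 2" and e: "e > 0"
  shows "wlen e n (mon n s a) = Fsa n s a"
  unfolding wlen_def
proof (rule Least_equality)
  show "\<exists>ws. set ws \<subseteq> gens e n \<and> length ws = Fsa n s a \<and> wprod n ws = mon n s a"
    using UB[OF n e V] .
  fix k assume "\<exists>ws. set ws \<subseteq> gens e n \<and> length ws = k \<and> wprod n ws = mon n s a"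
  then obtain ws where "set ws \<subseteq> gens e n" "length ws = k" "wprod n ws = mon n s a" by blast
  then show "Fsa n s a \<le> k" using LB[OF n e, of ws s a] V by simp
qed



definition Aset :: "nat \<Rightarrow> (nat \<Rightarrow> nat) \<Rightarrow> (nat \<times> nat) set" where
  "Aset n s = {x \<in> Pairs n. s (fst x) < s (snd x)}"

lemma finite_Aset[simp]: "finite (Aset n s)" unfolding Aset_def by simp

lemma Valid_inv:
  assumes V: "Valid e n s a" and e: "e > 0"
  shows "Valid e n (inv_into {1..n} s) (\<lambda>r. inverse (a (inv_into {1..n} s r)))"
    (is "Valid e n ?si ?ai")
proof -
  let ?R = "{1..n}"
  have b: "bij_betw s ?R ?R" using V unfolding Valid_def by auto
  have bi: "bij_betw ?si ?R ?R" using bij_betw_inv_into[OF b] .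
  have imi: "?si ` ?R \<subseteq> ?R" using bi by (simp add: bij_betw_def)
  have "\<forall>r\<in>?R. ?ai r ^ e = 1"
  proof
    fix r assume "r \<in> ?R"
    then have "?si r \<in> ?R" using imi by blast
    then show "?ai r ^ e = 1" using V unfolding Valid_def by (simp add: power_inverse)
  qed
  moreover have "prod ?ai ?R = 1"
  proof -
    have "prod ?ai ?R = inverse (\<Prod>r\<in>?R. a (?si r))"
      using prod_inversef[of "\<lambda>r. a (?si r)" ?R] by (simp add: comp_def)
    also have "(\<Prod>r\<in>?R. a (?si r)) = prod a ?R"
      using prod.reindex_bij_betw[OF bi, of a] by simp
    finally show ?thesis using V unfolding Valid_def by simp
  qed
  ultimately show ?thesis unfolding Valid_def using bi by auto
qed

lemma card_Inv_inv:
  assumes b: "bij_betw s {1..n} {1..n}"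
  shows "card (Inv n (inv_into {1..n} s)) = card (Inv n s)"
proof -
  let ?si = "inv_into {1..n} s"
  have bi: "bij_betw ?si {1..n} {1..n}" using bij_betw_inv_into[OF b] .
  have L: "?si (s x) = x" if "x \<in> {1..n}" for x using bij_betw_inv_into_left[OF b that] .
  have R: "s (?si x) = x" if "x \<in> {1..n}" for x using bij_betw_inv_into_right[OF b that] .
  have s1: "s x \<in> {1..n}" if "x \<in> {1..n}" for x using b that unfolding bij_betw_def by blast
  have s2: "?si x \<in> {1..n}" if "x \<in> {1..n}" for x using bi that unfolding bij_betw_def by blast
  have "bij_betw (\<lambda>x. (?si (snd x), ?si (fst x))) (Inv n ?si) (Inv n s)"
  proof (rule bij_betw_byWitness[of _ "\<lambda>x. (s (snd x), s (fst x))"])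
    show "\<forall>x\<in>Inv n ?si. (s (snd (?si (snd x), ?si (fst x))), s (fst (?si (snd x), ?si (fst x)))) = x"
      using R unfolding Inv_def Pairs_def by auto
    show "\<forall>x\<in>Inv n s. (?si (snd (s (snd x), s (fst x))), ?si (fst (s (snd x), s (fst x)))) = x"
      using L unfolding Inv_def Pairs_def by auto
    show "(\<lambda>x. (?si (snd x), ?si (fst x))) ` Inv n ?si \<subseteq> Inv n s"
    proof
      fix y assume "y \<in> (\<lambda>x. (?si (snd x), ?si (fst x))) ` Inv n ?si"
      then obtain p q where pq: "(p,q) \<in> Inv n ?si" "y = (?si q, ?si p)" by auto
      then have h: "p \<in> {1..n}" "q \<in> {1..n}" "p < q" "?si q < ?si p" unfolding Inv_def Pairs_def by auto
      show "y \<in> Inv n s" unfolding pq(2) Inv_def Pairs_def using h s2 R by auto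
    qed
    show "(\<lambda>x. (s (snd x), s (fst x))) ` Inv n s \<subseteq> Inv n ?si"
    proof
      fix y assume "y \<in> (\<lambda>x. (s (snd x), s (fst x))) ` Inv n s"
      then obtain p q where pq: "(p,q) \<in> Inv n s" "y = (s q, s p)" by auto
      then have h: "p \<in> {1..n}" "q \<in> {1..n}" "p < q" "s q < s p" unfolding Inv_def Pairs_def by auto
      show "y \<in> Inv n ?si" unfolding pq(2) Inv_def Pairs_def using h s1 L by auto
    qed
  qed
  then show ?thesis by (rule bij_betw_same_card)
qed

lemma card_NI_inv:
  assumes b: "bij_betw s {1..n} {1..n}"
  shows "card (NI n (inv_into {1..n} s) c) = card {x \<in> Aset n s. c (s (snd x)) \<noteq> 1}"
proof -
  let ?si = "inv_into {1..n} s"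
  have bi: "bij_betw ?si {1..n} {1..n}" using bij_betw_inv_into[OF b] .
  have L: "?si (s x) = x" if "x \<in> {1..n}" for x using bij_betw_inv_into_left[OF b that] .
  have R: "s (?si x) = x" if "x \<in> {1..n}" for x using bij_betw_inv_into_right[OF b that] .
  have s1: "s x \<in> {1..n}" if "x \<in> {1..n}" for x using b that unfolding bij_betw_def by blast
  have s2: "?si x \<in> {1..n}" if "x \<in> {1..n}" for x using bi that unfolding bij_betw_def by blast
  have "bij_betw (\<lambda>x. (?si (fst x), ?si (snd x))) (NI n ?si c) {x \<in> Aset n s. c (s (snd x)) \<noteq> 1}"
  proof (rule bij_betw_byWitness[of _ "\<lambda>x. (s (fst x), s (snd x))"])
    show "\<forall>x\<in>NI n ?si c. (s (fst (?si (fst x), ?si (snd x))), s (snd (?si (fst x), ?si (snd x)))) = x"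
      using R unfolding NI_def Pairs_def by auto
    show "\<forall>x\<in>{x \<in> Aset n s. c (s (snd x)) \<noteq> 1}. (?si (fst (s (fst x), s (snd x))), ?si (snd (s (fst x), s (snd x)))) = x"
      using L unfolding Aset_def Pairs_def by auto
    show "(\<lambda>x. (?si (fst x), ?si (snd x))) ` NI n ?si c \<subseteq> {x \<in> Aset n s. c (s (snd x)) \<noteq> 1}"
    proof
      fix y assume "y \<in> (\<lambda>x. (?si (fst x), ?si (snd x))) ` NI n ?si c"
      then obtain p q where pq: "(p,q) \<in> NI n ?si c" "y = (?si p, ?si q)" by auto
      then have h: "p \<in> {1..n}" "q \<in> {1..n}" "p < q" "?si p < ?si q" "c q \<noteq> 1"
        unfolding NI_def Pairs_def by auto
      show "y \<in> {x \<in> Aset n s. c (s (snd x)) \<noteq> 1}" unfolding pq(2) Aset_def Pairs_def using h s2 R by auto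
    qed
    show "(\<lambda>x. (s (fst x), s (snd x))) ` {x \<in> Aset n s. c (s (snd x)) \<noteq> 1} \<subseteq> NI n ?si c"
    proof
      fix y assume "y \<in> (\<lambda>x. (s (fst x), s (snd x))) ` {x \<in> Aset n s. c (s (snd x)) \<noteq> 1}"
      then obtain p q where pq: "(p,q) \<in> {x \<in> Aset n s. c (s (snd x)) \<noteq> 1}" "y = (s p, s q)" by auto
      then have h: "p \<in> {1..n}" "q \<in> {1..n}" "p < q" "s p < s q" "c (s q) \<noteq> 1"
        unfolding Aset_def Pairs_def by auto
      show "y \<in> NI n ?si c" unfolding pq(2) NI_def Pairs_def using h s1 L by auto
    qed
  qed
  then show ?thesis by (rule bij_betw_same_card)
qed

lemma Inv_A_card:
  assumes "inj_on s {1..n}"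
  shows "card (Inv n s) + card (Aset n s) = card (Pairs n)"
proof -
  have "Inv n s \<inter> Aset n s = {}" unfolding Inv_def Aset_def by auto
  moreover have "Inv n s \<union> Aset n s = Pairs n"
  proof
    show "Inv n s \<union> Aset n s \<subseteq> Pairs n" unfolding Inv_def Aset_def by auto
    show "Pairs n \<subseteq> Inv n s \<union> Aset n s"
    proof
      fix x assume x: "x \<in> Pairs n"
      obtain p q where xx: "x = (p,q)" by (cases x)
      have "p \<in> {1..n}" "q \<in> {1..n}" "p \<noteq> q" using x xx unfolding Pairs_def by auto
      then have "s p \<noteq> s q" using assms unfolding inj_on_def by blast
      then show "x \<in> Inv n s \<union> Aset n s" using x xx unfolding Inv_def Aset_def by auto
    qed
  qed
  ultimately show ?thesis using card_Un_disjoint[of "Inv n s" "Aset n s"] by simp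
qed



lemma card_S:
  fixes P Q :: "'a \<Rightarrow> bool"
  assumes "finite A" "\<And>x. x \<in> A \<Longrightarrow> P x \<or> Q x"
  shows "card {x\<in>A. P x} + card {x\<in>A. Q x} = card A + card {x\<in>A. P x \<and> Q x}"
proof -
  have "{x\<in>A. P x} \<union> {x\<in>A. Q x} = A" using assms(2) by auto
  moreover have "{x\<in>A. P x} \<inter> {x\<in>A. Q x} = {x\<in>A. P x \<and> Q x}" by auto
  ultimately show ?thesis using card_Un_Int[of "{x\<in>A. P x}" "{x\<in>A. Q x}"] assms(1) by simp
qed

lemma main_lr:
  assumes V: "Valid e n s a" and e: "e \<ge> 2" and n: "n \<ge> 2" and k: "1 \<le> k" "k \<le> e - 1"
  defines "L \<equiv> mpow n (lam e n) k"
  shows "(lpref e n (mon n s a) L \<longleftrightarrow> (\<forall>x\<in>Aset n s. a (snd x) = 1 \<or> a (snd x) = zeta e ^ k))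
       \<and> (rpref e n (mon n s a) L \<longleftrightarrow> (\<forall>x\<in>Aset n s. a (snd x) = 1 \<or> a (snd x) = zeta e ^ k))"
proof -
  let ?R = "{1..n}"
  let ?si = "inv_into ?R s" and ?ai = "\<lambda>r. inverse (a (inv_into ?R s r))"
  let ?z = "zeta e ^ k"
  have e0: "e > 0" using e by simp
  have z1: "?z \<noteq> 1" using zeta_pow_ne1[of k e] k e by simp
  have b: "bij_betw s ?R ?R" using V unfolding Valid_def by simp
  have inj: "inj_on s ?R" using b unfolding bij_betw_def by simp
  have bi: "bij_betw ?si ?R ?R" using bij_betw_inv_into[OF b] .
  have imi: "?si ` ?R \<subseteq> ?R" using bi by (simp add: bij_betw_def)
  have Lm: "L = mon n id (dl e n k)" unfolding L_def using lam_pow n by simp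
  have VL: "Valid e n id (dl e n k)" using Valid_dl e0 n by simp
  have Vi: "Valid e n ?si ?ai" using Valid_inv[OF V e0] .
  have gi: "ginv e n (mon n s a) = mon n ?si ?ai" using ginv_mon[OF V e0] .
  have nz: "\<And>r. r \<in> ?R \<Longrightarrow> a r \<noteq> 0" using Valid_nz[OF V e0] .
  have Lsi: "\<And>r. r \<in> ?R \<Longrightarrow> ?si (s r) = r" using bij_betw_inv_into_left[OF b] .
  have s1: "\<And>r. r \<in> ?R \<Longrightarrow> s r \<in> ?R" using b unfolding bij_betw_def by blast
  have wu: "wlen e n (mon n s a) = card (Inv n s) + 2 * card {x\<in>Aset n s. a (snd x) \<noteq> 1}"
  proof -
    have "NI n s a = {x\<in>Aset n s. a (snd x) \<noteq> 1}" unfolding NI_def Aset_def by auto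
    then show ?thesis using wlen_mon[OF V n e0] unfolding Fsa_def by simp
  qed
  have wL: "wlen e n L = 2 * card (Pairs n)"
  proof -
    have "Inv n id = {}" unfolding Inv_def Pairs_def by auto
    moreover have "NI n id (dl e n k) = Pairs n"
      unfolding NI_def Pairs_def dl_def using z1 by auto
    ultimately show ?thesis using wlen_mon[OF VL n e0] unfolding Lm Fsa_def by simp
  qed
  have wl: "wlen e n (mmult n (ginv e n (mon n s a)) L) = card (Inv n s) + 2 * card {x\<in>Aset n s. a (snd x) \<noteq> ?z}"
  proof -
    let ?c = "\<lambda>r. ?ai r * dl e n k (?si r)"
    have "mmult n (ginv e n (mon n s a)) L = mon n (id \<circ> ?si) ?c"
      unfolding gi Lm using mon_mult[OF imi] .
    also have "\<dots> = mon n ?si ?c" by simp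
    finally have eq: "mmult n (ginv e n (mon n s a)) L = mon n ?si ?c" .
    have Vc: "Valid e n ?si ?c" using Valid_mult[OF Vi VL] by simp
    have "{x\<in>Aset n s. ?c (s (snd x)) \<noteq> 1} = {x\<in>Aset n s. a (snd x) \<noteq> ?z}"
    proof (rule Collect_cong, rule conj_cong[OF refl])
      fix x assume "x \<in> Aset n s"
      then obtain p q where x: "x = (p,q)" "p \<in> ?R" "q \<in> ?R" "p < q" unfolding Aset_def Pairs_def by auto
      have "?c (s q) = inverse (a q) * ?z" using Lsi[OF x(3)] x unfolding dl_def by simp
      moreover have "inverse (a q) * ?z = 1 \<longleftrightarrow> a q = ?z"
        using nz[OF x(3)] by (auto simp: field_simps)
      ultimately show "?c (s (snd x)) \<noteq> 1 \<longleftrightarrow> a (snd x) \<noteq> ?z" using x by simp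
    qed
    then show ?thesis unfolding eq wlen_mon[OF Vc n e0] Fsa_def
      using card_Inv_inv[OF b] card_NI_inv[OF b, of ?c] by simp
  qed
  have wr: "wlen e n (mmult n L (ginv e n (mon n s a))) = card (Inv n s) + 2 * card {x\<in>Aset n s. a (snd x) \<noteq> ?z}"
  proof -
    let ?c = "\<lambda>r. dl e n k r * ?ai r"
    have "mmult n L (ginv e n (mon n s a)) = mon n (?si \<circ> id) (\<lambda>r. dl e n k r * ?ai (id r))"
      unfolding gi Lm by (rule mon_mult) auto
    also have "\<dots> = mon n ?si ?c" by simp
    finally have eq: "mmult n L (ginv e n (mon n s a)) = mon n ?si ?c" .
    have Vc: "Valid e n ?si ?c" using Valid_mult[OF VL Vi] by simp
    have "{x\<in>Aset n s. ?c (s (snd x)) \<noteq> 1} = {x\<in>Aset n s. a (snd x) \<noteq> ?z}"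
    proof (rule Collect_cong, rule conj_cong[OF refl])
      fix x assume "x \<in> Aset n s"
      then obtain p q where x: "x = (p,q)" "p \<in> ?R" "q \<in> ?R" "p < q" "s p < s q"
        unfolding Aset_def Pairs_def by auto
      have "s p \<in> ?R" using s1 x(2) by blast
      then have "s q \<noteq> 1" using x(5) by auto
      then have "?c (s q) = ?z * inverse (a q)" using Lsi[OF x(3)] x unfolding dl_def by simp
      moreover have "?z * inverse (a q) = 1 \<longleftrightarrow> a q = ?z"
        using nz[OF x(3)] by (auto simp: field_simps)
      ultimately show "?c (s (snd x)) \<noteq> 1 \<longleftrightarrow> a (snd x) \<noteq> ?z" using x by simp
    qed
    then show ?thesis unfolding eq wlen_mon[OF Vc n e0] Fsa_def
      using card_Inv_inv[OF b] card_NI_inv[OF b, of ?c] by simp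
  qed
  have cs: "card {x\<in>Aset n s. a (snd x) \<noteq> 1} + card {x\<in>Aset n s. a (snd x) \<noteq> ?z}
      = card (Aset n s) + card {x\<in>Aset n s. a (snd x) \<noteq> 1 \<and> a (snd x) \<noteq> ?z}"
    by (rule card_S) (use z1 in auto)
  have ia: "card (Inv n s) + card (Aset n s) = card (Pairs n)" using Inv_A_card[OF inj] .
  have cond: "card {x\<in>Aset n s. a (snd x) \<noteq> 1 \<and> a (snd x) \<noteq> ?z} = 0
      \<longleftrightarrow> (\<forall>x\<in>Aset n s. a (snd x) = 1 \<or> a (snd x) = ?z)"
  proof -
    have "finite {x\<in>Aset n s. a (snd x) \<noteq> 1 \<and> a (snd x) \<noteq> ?z}" by simp
    then show ?thesis by (simp only: card_0_eq) blast
  qed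
  have ar: "\<And>X Y A Z I P::nat. X + Y = A + Z \<Longrightarrow> I + A = P \<Longrightarrow>
      (I + 2*X + (I + 2*Y) = 2*P \<longleftrightarrow> Z = 0) \<and> ((I + 2*Y) + (I + 2*X) = 2*P \<longleftrightarrow> Z = 0)"
    by arith
  show ?thesis
    unfolding lpref_def rpref_def wu wL wl wr using ar[OF cs ia] cond by simp
qed

lemma Dk_iff:
  assumes V: "Valid e n s a" and e: "e > 0"
  shows "mon n s a \<in> Dk e n k \<longleftrightarrow> (\<forall>x\<in>Aset n s. a (snd x) = 1 \<or> a (snd x) = zeta e ^ k)"
proof -
  let ?w = "mon n s a"
  have G: "?w \<in> Geen e n" using Valid_Geen[OF V e] .
  have nz: "\<And>r. r \<in> {1..n} \<Longrightarrow> a r \<noteq> 0" using Valid_nz[OF V e] .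
  have s1: "\<And>r. r \<in> {1..n} \<Longrightarrow> s r \<in> {1..n}" using V unfolding Valid_def bij_betw_def by blast
  have nzw: "?w i c \<noteq> 0 \<longleftrightarrow> i \<in> {1..n} \<and> c = s i" for i c
    using nz unfolding mon_def by auto
  show ?thesis
  proof
    assume D: "?w \<in> Dk e n k"
    show "\<forall>x\<in>Aset n s. a (snd x) = 1 \<or> a (snd x) = zeta e ^ k"
    proof
      fix x assume "x \<in> Aset n s"
      then obtain p q where x: "x = (p,q)" "p \<in> {1..n}" "q \<in> {1..n}" "p < q" "s p < s q"
        unfolding Aset_def Pairs_def by auto
      have "?w q (s q) \<noteq> 0" using nzw x by simp
      moreover have "\<not> is_bullet ?w q (s q)"
        unfolding is_bullet_def using x nzw[of p "s p"] by blast
      ultimately have "?w q (s q) = 1 \<or> ?w q (s q) = zeta e ^ k" using D unfolding Dk_def by blast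
      then show "a (snd x) = 1 \<or> a (snd x) = zeta e ^ k" using x unfolding mon_def by simp
    qed
  next
    assume C: "\<forall>x\<in>Aset n s. a (snd x) = 1 \<or> a (snd x) = zeta e ^ k"
    have "\<forall>i c. ?w i c \<noteq> 0 \<and> \<not> is_bullet ?w i c \<longrightarrow> ?w i c = 1 \<or> ?w i c = zeta e ^ k"
    proof (intro allI impI)
      fix i c assume h: "?w i c \<noteq> 0 \<and> \<not> is_bullet ?w i c"
      then have ic: "i \<in> {1..n}" "c = s i" using nzw by auto
      from h obtain i' c' where "i' < i" "c' < c" "?w i' c' \<noteq> 0" unfolding is_bullet_def by blast
      then have "i' \<in> {1..n}" "c' = s i'" "i' < i" "s i' < s i" using nzw ic by auto
      then have "(i', i) \<in> Aset n s" unfolding Aset_def Pairs_def using ic by auto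
      then have "a i = 1 \<or> a i = zeta e ^ k" using C by fastforce
      then show "?w i c = 1 \<or> ?w i c = zeta e ^ k" using ic unfolding mon_def by simp
    qed
    then show "?w \<in> Dk e n k" unfolding Dk_def using G by blast
  qed
qed

theorem mainTheorem5:
  fixes e n k :: nat
  assumes "e \<ge> 2" and "n \<ge> 2" and "1 \<le> k" and "k \<le> e - 1"
  shows "interval e n (mpow n (lam e n) k) = Dk e n k \<and>
         balanced e n (mpow n (lam e n) k)"
proof -
  have e0: "e > 0" using assms by simp
  have l: "interval e n (mpow n (lam e n) k) = Dk e n k"
  proof (rule set_eqI)
    fix w
    show "w \<in> interval e n (mpow n (lam e n) k) \<longleftrightarrow> w \<in> Dk e n k"
    proof (cases "w \<in> Geen e n")
      case True
      then obtain s a where V: "Valid e n s a" and w: "w = mon n s a" using Geen_Valid by blast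
      show ?thesis unfolding interval_def using True main_lr[OF V assms] Dk_iff[OF V e0, of k] w by simp
    next
      case False
      then show ?thesis unfolding interval_def Dk_def by simp
    qed
  qed
  have r: "interval_r e n (mpow n (lam e n) k) = Dk e n k"
  proof (rule set_eqI)
    fix w
    show "w \<in> interval_r e n (mpow n (lam e n) k) \<longleftrightarrow> w \<in> Dk e n k"
    proof (cases "w \<in> Geen e n")
      case True
      then obtain s a where V: "Valid e n s a" and w: "w = mon n s a" using Geen_Valid by blast
      show ?thesis unfolding interval_r_def using True main_lr[OF V assms] Dk_iff[OF V e0, of k] w by simp
    next
      case False
      then show ?thesis unfolding interval_r_def Dk_def by simp
    qed
  qed
  show ?thesis using l r unfolding balanced_def by simp
qed


end
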